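(* There is an absolute constant $c>0$ such that the following holds. Let $0<\varepsilon\le1$ and $1\le m\le n^{3/2-\varepsilon}$. If $\alpha\in\mathcal L$ is neither trivial nor a spider, then \[\frac{1}{n^{|E(\alpha)|/2}}\cdot n^{\frac{w(V(\alpha))-w(S_{\min})}{2}}\ \le\ \frac{1}{n^{c\,\varepsilon\,|E(\alpha)|}},\] where $S_{\min}$ is a minimum vertex separator of $\alpha$.
   Context: A shape $\alpha=(V(\alpha),E(\alpha),U_\alpha,V_\alpha)$ consists of a finite vertex set $V(\alpha)$, each vertex typed as a "circle" or a "square"; a collection $E(\alpha)$ of edges, each joining a circle and a square and carrying a positive integer label; and two subsets $U_\alpha,V_\alpha\subseteq V(\alpha)$ (possibly intersecting). $W_\alpha=V(\alpha)\setminus(U_\alpha\cup V_\alpha)$. The shape is proper if it has no parallel edges. The degree $\deg(x)$ of a vertex is the sum of labels of incident edges, and $|E(\alpha)|$ denotes the sum of all edge labels. A shape is trivial if $U_\alpha=V_\alpha$, $W_\alpha=\emptyset$ and $E(\alpha)=\emptyset$. A left spider is a proper shape having two distinct squares $i,j\in U_\alpha$ of degree $1$ both adjacent to a common circle; a right spider is the same with $V_\alpha$ in place of $U_\alpha$; a spider is a left or right spider. For $S\subseteq V(\alpha)$, $w(S)=(\#\text{circles in }S)\log_n m+(\#\text{squares in }S)$. A vertex separator is a set $S\subseteq V(\alpha)$ such that every path from a vertex of $U_\alpha$ to a vertex of $V_\alpha$ (including length-zero paths, so $U_\alpha\cap V_\alpha\subseteq S$) contains a vertex of $S$; a minimum vertex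 separator minimizes $w$. $\mathcal L$ (depending on parameters $\delta,\tau>0$) is the set of proper shapes $\alpha$ such that: $U_\alpha,V_\alpha$ contain only squares and $|U_\alpha|,|V_\alpha|\le n^\delta$; $W_\alpha$ has no vertices of degree $0$; for every square $i$, $\deg(i)+\mathbf 1[i\in U_\alpha]+\mathbf 1[i\in V_\alpha]$ is even; every circle has even degree at least $4$; and $|E(\alpha)|\le n^\tau$. *)

theory Defs
  imports Complex_Main "HOL-Library.Multiset"
begin

text \<open>Vertices are natural numbers (any finite vertex set can be relabelled).
  Each vertex is typed as a circle (circ v) or a square (not circ v).
  Edges form a multiset of triples (circle, square, label), so parallel edges are allowed
  in a general shape; properness excludes them.\<close>

record shape =
  verts :: "nat set"
  circ  :: "nat \<Rightarrow> bool"
  edges :: "(nat \<times> nat \<times> nat) multiset"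
  Uset  :: "nat set"
  Vset  :: "nat set"

definition wf_shape :: "shape \<Rightarrow> bool" where
  "wf_shape a \<longleftrightarrow> finite (verts a) \<and> Uset a \<subseteq> verts a \<and> Vset a \<subseteq> verts a \<and>
     (\<forall>(x, y, l) \<in># edges a. x \<in> verts a \<and> y \<in> verts a \<and> circ a x \<and> \<not> circ a y \<and> 0 < l)"

definition Wset :: "shape \<Rightarrow> nat set" where
  "Wset a = verts a - (Uset a \<union> Vset a)"

definition proper :: "shape \<Rightarrow> bool" where
  "proper a \<longleftrightarrow> (\<forall>x y. size (filter_mset (\<lambda>(p, q, _). p = x \<and> q = y) (edges a)) \<le> 1)"

definition deg :: "shape \<Rightarrow> nat \<Rightarrow> nat" where
  "deg a v = sum_mset (image_mset (\<lambda>(p, q, l). l) (filter_mset (\<lambda>(p, q, _). p = v \<or> q = v) (edges a)))"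

text \<open>|E(alpha)|: total sum of edge labels.\<close>
definition total_label :: "shape \<Rightarrow> nat" where
  "total_label a = sum_mset (image_mset (\<lambda>(p, q, l). l) (edges a))"

definition adjacent :: "shape \<Rightarrow> nat \<Rightarrow> nat \<Rightarrow> bool" where
  "adjacent a x y \<longleftrightarrow> (\<exists>l. (x, y, l) \<in># edges a \<or> (y, x, l) \<in># edges a)"

definition trivial_shape :: "shape \<Rightarrow> bool" where
  "trivial_shape a \<longleftrightarrow> Uset a = Vset a \<and> Wset a = {} \<and> edges a = {#}"

definition left_spider :: "shape \<Rightarrow> bool" where
  "left_spider a \<longleftrightarrow> proper a \<and> (\<exists>i j c. i \<noteq> j \<and> i \<in> Uset a \<and> j \<in> Uset a \<and>
      \<not> circ a i \<and> \<not> circ a j \<and> deg a i = 1 \<and> deg a j = 1 \<and>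
      c \<in> verts a \<and> circ a c \<and> adjacent a c i \<and> adjacent a c j)"

definition right_spider :: "shape \<Rightarrow> bool" where
  "right_spider a \<longleftrightarrow> proper a \<and> (\<exists>i j c. i \<noteq> j \<and> i \<in> Vset a \<and> j \<in> Vset a \<and>
      \<not> circ a i \<and> \<not> circ a j \<and> deg a i = 1 \<and> deg a j = 1 \<and>
      c \<in> verts a \<and> circ a c \<and> adjacent a c i \<and> adjacent a c j)"

definition spider :: "shape \<Rightarrow> bool" where
  "spider a \<longleftrightarrow> left_spider a \<or> right_spider a"

definition wt :: "nat \<Rightarrow> nat \<Rightarrow> shape \<Rightarrow> nat set \<Rightarrow> real" where
  "wt n m a S = real (card {v \<in> S. circ a v}) * log (real n) (real m) + real (card {v \<in> S. \<not> circ a v})"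

definition is_path :: "shape \<Rightarrow> nat list \<Rightarrow> bool" where
  "is_path a ps \<longleftrightarrow> ps \<noteq> [] \<and> distinct ps \<and> set ps \<subseteq> verts a \<and>
     (\<forall>k. Suc k < length ps \<longrightarrow> adjacent a (ps ! k) (ps ! Suc k))"

definition vertex_separator :: "shape \<Rightarrow> nat set \<Rightarrow> bool" where
  "vertex_separator a S \<longleftrightarrow> S \<subseteq> verts a \<and>
     (\<forall>ps. is_path a ps \<longrightarrow> hd ps \<in> Uset a \<longrightarrow> last ps \<in> Vset a \<longrightarrow> set ps \<inter> S \<noteq> {})"

definition min_vertex_separator :: "nat \<Rightarrow> nat \<Rightarrow> shape \<Rightarrow> nat set \<Rightarrow> bool" where
  "min_vertex_separator n m a S \<longleftrightarrow> vertex_separator a S \<and>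
     (\<forall>T. vertex_separator a T \<longrightarrow> wt n m a S \<le> wt n m a T)"

definition in_L :: "real \<Rightarrow> real \<Rightarrow> nat \<Rightarrow> shape \<Rightarrow> bool" where
  "in_L \<delta> \<tau> n a \<longleftrightarrow> proper a \<and>
     (\<forall>v \<in> Uset a \<union> Vset a. \<not> circ a v) \<and>
     real (card (Uset a)) \<le> real n powr \<delta> \<and> real (card (Vset a)) \<le> real n powr \<delta> \<and>
     (\<forall>v \<in> Wset a. deg a v \<noteq> 0) \<and>
     (\<forall>i \<in> verts a. \<not> circ a i \<longrightarrow>
        even (deg a i + (if i \<in> Uset a then 1 else 0) + (if i \<in> Vset a then 1 else 0))) \<and>
     (\<forall>c \<in> verts a. circ a c \<longrightarrow> even (deg a c) \<and> 4 \<le> deg a c) \<and>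
     real (total_label a) \<le> real n powr \<tau>"

end

theory Submission imports Defs begin

lemma distinct_mset_eq:
  assumes "\<And>x. count M x \<le> 1"
  shows "mset_set (set_mset M) = M"
  unfolding multiset_eq_iff
proof
  fix x
  have "count M x \<le> 1" by (rule assms)
  then show "count (mset_set (set_mset M)) x = count M x"
    by (cases "count M x") (auto simp: count_eq_zero_iff count_mset_set(1) count_inI)
qed

lemma proper_count:
  assumes "proper a"
  shows "count (edges a) e \<le> 1"
proof -
  obtain x y l where e: "e = (x,y,l)" by (cases e) auto
  have "count (edges a) e = count (filter_mset (\<lambda>(p, q, _). p = x \<and> q = y) (edges a)) e"
    by (simp add: e)
  also have "\<dots> \<le> size (filter_mset (\<lambda>(p, q, _). p = x \<and> q = y) (edges a))" by (rule count_le_size)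
  also have "\<dots> \<le> 1" using assms unfolding proper_def by blast
  finally show ?thesis .
qed

lemma sum_mset_set:
  assumes "proper a"
  shows "sum_mset (image_mset f (filter_mset P (edges a))) = (\<Sum>e\<in>{e\<in>set_mset (edges a). P e}. f e)"
proof -
  have "\<And>x. count (filter_mset P (edges a)) x \<le> 1" using proper_count[OF assms]
    by simp
  hence "mset_set (set_mset (filter_mset P (edges a))) = filter_mset P (edges a)" by (rule distinct_mset_eq)
  thus ?thesis by (metis set_mset_filter sum_unfold_sum_mset)
qed

lemma deg_sum:
  assumes "proper a"
  shows "deg a v = (\<Sum>e\<in>{e\<in>set_mset (edges a). fst e = v \<or> fst (snd e) = v}. snd (snd e))"
  unfolding deg_def using sum_mset_set[OF assms, of "\<lambda>(p,q,l). l" "\<lambda>(p, q, _). p = v \<or> q = v"]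
  by (simp add: case_prod_beta)

lemma total_sum:
  assumes "proper a"
  shows "total_label a = (\<Sum>e\<in>set_mset (edges a). snd (snd e))"
  unfolding total_label_def using sum_mset_set[OF assms, of "\<lambda>(p,q,l). l" "\<lambda>_. True"]
  by (simp add: case_prod_beta)

lemma card_set_mset_le: "card (set_mset M) \<le> size M"
  by (induction M) (auto simp: card_insert_if)

lemma inj_tgt:
  assumes "proper a" "e1 \<in># edges a" "e2 \<in># edges a" "fst e1 = fst e2" "fst (snd e1) = fst (snd e2)"
  shows "e1 = e2"
proof (rule ccontr)
  assume ne: "e1 \<noteq> e2"
  obtain x y l where e: "e1 = (x,y,l)" by (cases e1) auto
  define P where "P = (\<lambda>(p::nat, q::nat, _::nat). p = x \<and> q = y)"
  have "{e1,e2} \<subseteq> set_mset (filter_mset P (edges a))" using assms e by (auto simp: P_def case_prod_beta)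
  hence "card {e1,e2} \<le> card (set_mset (filter_mset P (edges a)))" by (intro card_mono) auto
  also have "\<dots> \<le> size (filter_mset P (edges a))" by (rule card_set_mset_le)
  also have "\<dots> \<le> 1" using assms(1) unfolding proper_def P_def by blast
  finally show False using ne by simp
qed

lemma arith1: "(x::real) \<le> (if b then t else 0) + r/2 + k/2 \<Longrightarrow> b \<Longrightarrow> k \<le> 1 \<Longrightarrow> t \<le> 3/2 - e \<Longrightarrow> 4 \<le> r \<Longrightarrow> e \<le> 1
  \<Longrightarrow> x \<le> (1-e/4)*r"
proof -
  assume h: "x \<le> (if b then t else 0) + r/2 + k/2" "b" "k \<le> 1" "t \<le> 3/2 - e" "4 \<le> r" "e \<le> 1"
  have nl: "(1/2 - e/4) * 4 \<le> (1/2 - e/4) * r" using h by (intro mult_left_mono) auto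
  have nl2: "(1 - e/4) * r = r / 2 + (1/2 - e/4) * r" by (simp add: algebra_simps)
  have nl3: "(1/2 - e/4) * 4 = 2 - e" by simp
  show ?thesis using h nl nl2 nl3 by simp
qed
lemma arith2: "(x::real) \<le> (if b then t else 0) + r/2 + k/2 \<Longrightarrow> \<not> b \<Longrightarrow> k \<le> 2 \<Longrightarrow> 4 \<le> r \<Longrightarrow> e \<le> 1
  \<Longrightarrow> x \<le> (1-e/4)*r"
proof -
  assume h: "x \<le> (if b then t else 0) + r/2 + k/2" "\<not> b" "k \<le> 2" "4 \<le> r" "e \<le> 1"
  have nl: "(1/2 - e/4) * 4 \<le> (1/2 - e/4) * r" using h by (intro mult_left_mono) auto
  have nl2: "(1 - e/4) * r = r / 2 + (1/2 - e/4) * r" by (simp add: algebra_simps)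
  have nl3: "(1/2 - e/4) * 4 = 2 - e" by simp
  show ?thesis using h nl nl2 nl3 by simp
qed

lemma arith3: "(x::real) \<le> (1 - e/4)*t \<Longrightarrow> x/2 - t/2 \<le> -(1/8*e*t)"
  by (simp add: algebra_simps)

lemma wt_sum:
  assumes "finite X"
  shows "wt n m a X = (\<Sum>v\<in>X. if circ a v then log (real n) (real m) else 1)"
proof -
  have e1: "X \<inter> {x. circ a x} = {v\<in>X. circ a v}" by blast
  have e2: "X \<inter> - {x. circ a x} = {v\<in>X. \<not> circ a v}" by blast
  show ?thesis using assms unfolding sum.If_cases[OF assms] e1 e2 wt_def by simp
qed

lemma key:
  fixes a :: shape and S :: "nat set" and \<epsilon> :: real
  assumes wf: "wf_shape a" and L: "in_L \<delta> \<tau> n a" and ns: "\<not> spider a" and sep: "vertex_separator a S"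
    and e0: "0 < \<epsilon>" and e1: "\<epsilon> \<le> 1" and tle: "log (real n) (real m) \<le> 3/2 - \<epsilon>"
  shows "wt n m a (verts a) - wt n m a S \<le> (1 - \<epsilon>/4) * real (total_label a)"
proof -
  define t where "t = log (real n) (real m)"
  define E where "E = set_mset (edges a)"
  define src :: "nat \<times> nat \<times> nat \<Rightarrow> nat" where "src = fst"
  define tgt :: "nat \<times> nat \<times> nat \<Rightarrow> nat" where "tgt = (\<lambda>e. fst (snd e))"
  define lab :: "nat \<times> nat \<times> nat \<Rightarrow> nat" where "lab = (\<lambda>e. snd (snd e))"
  define wv where "wv = (\<lambda>v. if circ a v then t else 1)"
  define rd where "rd = (\<lambda>v. real (deg a v))"
  have pr: "proper a" using L unfolding in_L_def by blast
  have finV: "finite (verts a)" using wf unfolding wf_shape_def by blast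
  have finE: "finite E" unfolding E_def by simp
  have Eprop: "src e \<in> verts a \<and> tgt e \<in> verts a \<and> circ a (src e) \<and> \<not> circ a (tgt e) \<and> 0 < lab e \<and> e \<in># edges a"
    if "e \<in> E" for e
    using wf that unfolding wf_shape_def E_def src_def tgt_def lab_def by (auto simp: case_prod_beta)
  have rdE: "rd v = (\<Sum>e\<in>{e\<in>E. src e = v \<or> tgt e = v}. real (lab e))" for v
    unfolding rd_def deg_sum[OF pr] E_def src_def tgt_def lab_def by simp
  have SV: "S \<subseteq> verts a" using sep unfolding vertex_separator_def by blast
  have diff: "wt n m a (verts a) - wt n m a S = (\<Sum>v\<in>verts a - S. wv v)"
    using wt_sum[OF finV] wt_sum[of S] finite_subset[OF SV finV] sum_diff[OF finV SV, of wv]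
    unfolding wv_def t_def by simp
  have Lp: "\<forall>v\<in>Uset a \<union> Vset a. \<not> circ a v"
     "\<forall>v \<in> Wset a. deg a v \<noteq> 0"
     "\<forall>i \<in> verts a. \<not> circ a i \<longrightarrow>
        even (deg a i + (if i \<in> Uset a then 1 else 0) + (if i \<in> Vset a then 1 else 0))"
     "\<forall>c \<in> verts a. circ a c \<longrightarrow> even (deg a c) \<and> 4 \<le> deg a c"
    using L unfolding in_L_def by blast+
  have degpos: "deg a v > 0" if v: "v \<in> verts a - S" for v
  proof (cases "circ a v")
    case True then show ?thesis using Lp(4) v by fastforce
  next
    case False
    show ?thesis
    proof (cases "v \<in> Uset a \<and> v \<in> Vset a")
      case True
      have "is_path a [v]" using v unfolding is_path_def by auto
      then show ?thesis using sep True v unfolding vertex_separator_def by fastforce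
    next
      case nb: False
      show ?thesis
      proof (cases "v \<in> Uset a \<or> v \<in> Vset a")
        case True
        then show ?thesis using nb Lp(3) v False by (metis DiffD1 even_add gr0I odd_one add_0)
      next
        case False
        then have "v \<in> Wset a" using v unfolding Wset_def by blast
        then show ?thesis using Lp(2) by blast
      qed
    qed
  qed
  have vexp: "wv v = (\<Sum>e\<in>E. if src e = v \<or> tgt e = v then real (lab e) * wv v / rd v else 0)"
    if v: "v \<in> verts a - S" for v
  proof -
    have "(\<Sum>e\<in>E. if src e = v \<or> tgt e = v then real (lab e) * wv v / rd v else 0)
       = (\<Sum>e\<in>{e\<in>E. src e = v \<or> tgt e = v}. real (lab e) * wv v / rd v)"
      using finE by (simp add: sum.inter_filter)
    also have "\<dots> = (\<Sum>e\<in>{e\<in>E. src e = v \<or> tgt e = v}. real (lab e)) * wv v / rd v"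
      by (simp add: sum_distrib_right sum_divide_distrib)
    also have "\<dots> = wv v" using degpos[OF v] rdE[of v] unfolding rd_def by simp
    finally show ?thesis by simp
  qed
  define g where "g = (\<lambda>e. (if src e \<notin> S then real (lab e) * t / rd (src e) else 0)
     + (if tgt e \<notin> S then real (lab e) / rd (tgt e) else 0))"
  have geq: "(\<Sum>v\<in>verts a - S. if src e = v \<or> tgt e = v then real (lab e) * wv v / rd v else 0) = g e"
    if e: "e \<in> E" for e
  proof -
    have ne: "src e \<noteq> tgt e" using Eprop[OF e] by metis
    have "(\<Sum>v\<in>verts a - S. if src e = v \<or> tgt e = v then real (lab e) * wv v / rd v else 0)
      = (\<Sum>v\<in>verts a - S. (if v = src e then real (lab e) * wv v / rd v else 0)
          + (if v = tgt e then real (lab e) * wv v / rd v else 0))"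
      by (rule sum.cong) (use ne in auto)
    also have "\<dots> = g e" using finV Eprop[OF e]
      by (simp add: sum.distrib g_def wv_def)
    finally show ?thesis .
  qed
  have swap: "(\<Sum>v\<in>verts a - S. wv v) = (\<Sum>e\<in>E. g e)"
  proof -
    have "(\<Sum>v\<in>verts a - S. wv v) = (\<Sum>v\<in>verts a - S. \<Sum>e\<in>E. if src e = v \<or> tgt e = v then real (lab e) * wv v / rd v else 0)"
      using vexp by simp
    also have "\<dots> = (\<Sum>e\<in>E. \<Sum>v\<in>verts a - S. if src e = v \<or> tgt e = v then real (lab e) * wv v / rd v else 0)"
      by (rule sum.swap)
    also have "\<dots> = (\<Sum>e\<in>E. g e)" using geq by simp
    finally show ?thesis .
  qed
  define C where "C = {v\<in>verts a. circ a v}"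
  have finC: "finite C" using finV unfolding C_def by simp
  have srcC: "src ` E \<subseteq> C" using Eprop unfolding C_def by auto
  have group: "(\<Sum>e\<in>E. g e) = (\<Sum>c\<in>C. \<Sum>e\<in>{e\<in>E. src e = c}. g e)"
    using sum.group[OF finE finC srcC, of g] by simp
  have rdC: "rd c = (\<Sum>e\<in>{e\<in>E. src e = c}. real (lab e))" if c: "c \<in> C" for c
  proof -
    have "{e\<in>E. src e = c \<or> tgt e = c} = {e\<in>E. src e = c}"
      using Eprop c unfolding C_def by auto
    then show ?thesis using rdE[of c] by simp
  qed
  have tot: "real (total_label a) = (\<Sum>c\<in>C. rd c)"
  proof -
    have "real (total_label a) = (\<Sum>e\<in>E. real (lab e))"
      unfolding total_sum[OF pr] E_def lab_def by simp
    also have "\<dots> = (\<Sum>c\<in>C. \<Sum>e\<in>{e\<in>E. src e = c}. real (lab e))"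
      using sum.group[OF finE finC srcC, of "\<lambda>e. real (lab e)"] by simp
    also have "\<dots> = (\<Sum>c\<in>C. rd c)" using rdC by simp
    finally show ?thesis .
  qed
  have perc: "(\<Sum>e\<in>{e\<in>E. src e = c}. g e) \<le> (1 - \<epsilon>/4) * rd c" if c: "c \<in> C" for c
  proof -
    define Ec where "Ec = {e\<in>E. src e = c}"
    have finEc: "finite Ec" using finE unfolding Ec_def by simp
    have cV: "c \<in> verts a" "circ a c" using c unfolding C_def by auto
    have deg4: "rd c \<ge> 4" using Lp(4) cV unfolding rd_def by simp
    define D1 where "D1 = {e\<in>Ec. tgt e \<notin> S \<and> deg a (tgt e) = 1}"
    have labdeg: "lab e \<le> deg a (tgt e)" if e: "e \<in> E" for e
    proof -
      have "real (lab e) \<le> (\<Sum>e\<in>{e'\<in>E. src e' = tgt e \<or> tgt e' = tgt e}. real (lab e))"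
        by (rule member_le_sum) (use e finE in auto)
      then show ?thesis using rdE[of "tgt e"] unfolding rd_def by simp
    qed
    have gb: "g e \<le> (if c \<notin> S then real (lab e) * t / rd c else 0) + real (lab e) / 2 + (if e \<in> D1 then 1/2 else 0)"
      if e: "e \<in> Ec" for e
    proof -
      have eE: "e \<in> E" and se: "src e = c" using e unfolding Ec_def by auto
      have "(if tgt e \<notin> S then real (lab e) / rd (tgt e) else 0) \<le> real (lab e) / 2 + (if e \<in> D1 then 1/2 else 0)"
      proof (cases "e \<in> D1")
        case True
        then have "deg a (tgt e) = 1" "tgt e \<notin> S" unfolding D1_def by auto
        moreover have "lab e = 1" using labdeg[OF eE] Eprop[OF eE] calculation by simp
        ultimately show ?thesis using True unfolding rd_def by simp
      next
        case False
        show ?thesis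
        proof (cases "tgt e \<notin> S")
          case True
          then have "deg a (tgt e) \<noteq> 1" using False e unfolding D1_def by auto
          then consider "deg a (tgt e) = 0" | "deg a (tgt e) \<ge> 2" by linarith
          then show ?thesis
          proof cases
            case 1 then show ?thesis using False unfolding rd_def by simp
          next
            case 2
            then have "real (lab e) / rd (tgt e) \<le> real (lab e) / 2" unfolding rd_def
              by (intro divide_left_mono) auto
            then show ?thesis using False True by simp
          qed
        next
          case False
          then show ?thesis by simp
        qed
      qed
      moreover have "g e = (if c \<notin> S then real (lab e) * t / rd c else 0) + (if tgt e \<notin> S then real (lab e) / rd (tgt e) else 0)"
        unfolding g_def using se by simp
      ultimately show ?thesis by linarith
    qed
    have sum1: "(\<Sum>e\<in>Ec. if c \<notin> S then real (lab e) * t / rd c else 0) = (if c \<notin> S then t else 0)"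
    proof (cases "c \<notin> S")
      case True
      have "(\<Sum>e\<in>Ec. real (lab e) * t / rd c) = (\<Sum>e\<in>Ec. real (lab e)) * t / rd c"
        by (simp add: sum_distrib_right sum_divide_distrib)
      also have "\<dots> = t" using rdC[OF c] deg4 unfolding Ec_def by simp
      finally show ?thesis using True by simp
    qed simp
    have sum3: "(\<Sum>e\<in>Ec. if e \<in> D1 then (1/2::real) else 0) = real (card D1) / 2"
    proof -
      have "D1 \<subseteq> Ec" unfolding D1_def by blast
      then have "Ec \<inter> D1 = D1" by blast
      then show ?thesis using finEc by (simp add: sum.If_cases)
    qed
    have sumb: "(\<Sum>e\<in>Ec. g e) \<le> (if c \<notin> S then t else 0) + rd c / 2 + real (card D1) / 2"
    proof -
      have "(\<Sum>e\<in>Ec. g e) \<le> (\<Sum>e\<in>Ec. (if c \<notin> S then real (lab e) * t / rd c else 0) + real (lab e) / 2 + (if e \<in> D1 then 1/2 else 0))"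
        by (rule sum_mono) (rule gb)
      also have "\<dots> = (\<Sum>e\<in>Ec. if c \<notin> S then real (lab e) * t / rd c else 0) + (\<Sum>e\<in>Ec. real (lab e)) / 2 + (\<Sum>e\<in>Ec. if e \<in> D1 then (1/2::real) else 0)"
        by (simp add: sum.distrib sum_divide_distrib)
      also have "\<dots> = (if c \<notin> S then t else 0) + rd c / 2 + real (card D1) / 2"
        using sum1 sum3 rdC[OF c] unfolding Ec_def by simp
      finally show ?thesis .
    qed
    have finD: "finite D1" using finEc unfolding D1_def by simp
    define Y where "Y = tgt ` D1"
    have injD: "inj_on tgt D1"
    proof (rule inj_onI)
      fix e1 e2 assume "e1 \<in> D1" "e2 \<in> D1" "tgt e1 = tgt e2"
      then have h: "e1 \<in> E" "e2 \<in> E" "src e1 = c" "src e2 = c" "tgt e1 = tgt e2" unfolding D1_def Ec_def by auto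
      show "e1 = e2" using inj_tgt[OF pr, of e1 e2] h unfolding E_def src_def tgt_def by simp
    qed
    have cardY: "card D1 = card Y" unfolding Y_def using card_image[OF injD] by simp
    have finY: "finite Y" unfolding Y_def using finD by simp
    have Yp: "y \<in> verts a \<and> \<not> circ a y \<and> deg a y = 1 \<and> y \<notin> S \<and> adjacent a c y \<and> (y \<in> Uset a \<or> y \<in> Vset a)
         \<and> \<not> (y \<in> Uset a \<and> y \<in> Vset a)" if y: "y \<in> Y" for y
    proof -
      obtain e where e: "e \<in> D1" "y = tgt e" using y unfolding Y_def by blast
      have eE: "e \<in> E" "src e = c" using e unfolding D1_def Ec_def by auto
      have 1: "y \<in> verts a" "\<not> circ a y" "deg a y = 1" "y \<notin> S" using e Eprop[OF eE(1)] unfolding D1_def by auto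
      have "(src e, tgt e, lab e) \<in># edges a" unfolding src_def tgt_def lab_def using eE(1) unfolding E_def by simp
      then have "(c, y, lab e) \<in># edges a" using eE(2) e(2) by simp
      then have 2: "adjacent a c y" unfolding adjacent_def by blast
      have "even (deg a y + (if y \<in> Uset a then 1 else 0) + (if y \<in> Vset a then 1 else 0))"
        using Lp(3) 1 by blast
      then have "(y \<in> Uset a \<or> y \<in> Vset a) \<and> \<not> (y \<in> Uset a \<and> y \<in> Vset a)" using 1 by (auto split: if_splits)
      then show ?thesis using 1 2 by blast
    qed
    have sameU: "y1 = y2" if "y1 \<in> Y" "y2 \<in> Y" "y1 \<in> Uset a" "y2 \<in> Uset a" for y1 y2
    proof (rule ccontr)
      assume "y1 \<noteq> y2"
      moreover have "y1 \<in> verts a \<and> \<not> circ a y1 \<and> deg a y1 = 1 \<and> adjacent a c y1" using Yp[OF that(1)] by blast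
      moreover have "y2 \<in> verts a \<and> \<not> circ a y2 \<and> deg a y2 = 1 \<and> adjacent a c y2" using Yp[OF that(2)] by blast
      ultimately have "left_spider a" unfolding left_spider_def
        using pr that(3,4) cV by (intro conjI exI[of _ y1] exI[of _ y2] exI[of _ c]) auto
      then show False using ns unfolding spider_def by blast
    qed
    have sameV: "y1 = y2" if "y1 \<in> Y" "y2 \<in> Y" "y1 \<in> Vset a" "y2 \<in> Vset a" for y1 y2
    proof (rule ccontr)
      assume "y1 \<noteq> y2"
      moreover have "y1 \<in> verts a \<and> \<not> circ a y1 \<and> deg a y1 = 1 \<and> adjacent a c y1" using Yp[OF that(1)] by blast
      moreover have "y2 \<in> verts a \<and> \<not> circ a y2 \<and> deg a y2 = 1 \<and> adjacent a c y2" using Yp[OF that(2)] by blast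
      ultimately have "right_spider a" unfolding right_spider_def
        using pr that(3,4) cV by (intro conjI exI[of _ y1] exI[of _ y2] exI[of _ c]) auto
      then show False using ns unfolding spider_def by blast
    qed
    have mix: False if "c \<notin> S" "y1 \<in> Y" "y2 \<in> Y" "y1 \<in> Uset a" "y2 \<in> Vset a" for y1 y2
    proof -
      have p1: "y1 \<notin> Vset a" "y2 \<notin> Uset a" using Yp[OF that(2)] Yp[OF that(3)] that by blast+
      define ps where "ps = [y1, c, y2]"
      have adj: "adjacent a y1 c" "adjacent a c y2" using Yp[OF that(2)] Yp[OF that(3)] unfolding adjacent_def by blast+
      have "is_path a ps" unfolding is_path_def ps_def
      proof (intro conjI allI impI)
        show "distinct [y1, c, y2]" using Yp[OF that(2)] Yp[OF that(3)] cV p1 that by auto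
        show "set [y1, c, y2] \<subseteq> verts a" using Yp[OF that(2)] Yp[OF that(3)] cV by auto
        fix k assume "Suc k < length [y1, c, y2]"
        then have "k = 0 \<or> k = 1" by auto
        then show "adjacent a ([y1, c, y2] ! k) ([y1, c, y2] ! Suc k)" using adj by auto
      qed simp
      moreover have "set ps \<inter> S = {}" using Yp[OF that(2)] Yp[OF that(3)] that unfolding ps_def by auto
      moreover have "hd ps \<in> Uset a" "last ps \<in> Vset a" unfolding ps_def using that(4,5) by simp_all
      moreover have "\<forall>ps. is_path a ps \<longrightarrow> hd ps \<in> Uset a \<longrightarrow> last ps \<in> Vset a \<longrightarrow> set ps \<inter> S \<noteq> {}"
        using sep unfolding vertex_separator_def by blast
      ultimately show False by blast
    qed
    have cU: "card (Y \<inter> Uset a) \<le> 1" using finY sameU by (simp add: card_le_Suc0_iff_eq)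
    have cVs: "card (Y \<inter> Vset a) \<le> 1" using finY sameV by (simp add: card_le_Suc0_iff_eq)
    have "Y = (Y \<inter> Uset a) \<union> (Y \<inter> Vset a)" using Yp by blast
    then have "card Y \<le> card (Y \<inter> Uset a) + card (Y \<inter> Vset a)" by (metis card_Un_le)
    then have c2: "card D1 \<le> 2" using cU cVs cardY by simp
    have c1: "card D1 \<le> 1" if "c \<notin> S"
    proof -
      have "\<forall>y1\<in>Y. \<forall>y2\<in>Y. y1 = y2"
      proof (intro ballI)
        fix y1 y2 assume y: "y1 \<in> Y" "y2 \<in> Y"
        have o1: "y1 \<in> Uset a \<or> y1 \<in> Vset a" using Yp[OF y(1)] by blast
        have o2: "y2 \<in> Uset a \<or> y2 \<in> Vset a" using Yp[OF y(2)] by blast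
        show "y1 = y2"
        proof (cases "y1 \<in> Uset a")
          case u1: True
          show ?thesis
          proof (cases "y2 \<in> Uset a")
            case True then show ?thesis using sameU[OF y u1] by blast
          next
            case False then have "y2 \<in> Vset a" using o2 by blast
            then show ?thesis using mix[OF that y u1] by blast
          qed
        next
          case v1: False
          then have v1': "y1 \<in> Vset a" using o1 by blast
          show ?thesis
          proof (cases "y2 \<in> Uset a")
            case True then show ?thesis using mix[OF that y(2) y(1) True v1'] by blast
          next
            case False then have "y2 \<in> Vset a" using o2 by blast
            then show ?thesis using sameV[OF y v1'] by blast
          qed
        qed
      qed
      then show ?thesis using finY cardY by (simp add: card_le_Suc0_iff_eq)
    qed
    have cardD: "card D1 \<le> 2 \<and> (c \<notin> S \<longrightarrow> card D1 \<le> 1)" using c1 c2 by blast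
    have tle': "t \<le> 3/2 - \<epsilon>" using tle unfolding t_def .
    have sumb': "(\<Sum>e\<in>{e\<in>E. src e = c}. g e) \<le> (if c \<notin> S then t else 0) + rd c / 2 + real (card D1) / 2"
      using sumb unfolding Ec_def .
    show ?thesis
    proof (cases "c \<notin> S")
      case True
      then have "real (card D1) \<le> 1" using cardD by simp
      then show ?thesis using arith1[OF sumb' True _ tle' deg4 e1] by simp
    next
      case False
      then have "real (card D1) \<le> 2" using cardD by simp
      then show ?thesis using arith2[OF sumb' False _ deg4 e1] by simp
    qed
  qed
  have "wt n m a (verts a) - wt n m a S = (\<Sum>c\<in>C. \<Sum>e\<in>{e\<in>E. src e = c}. g e)"
    using diff swap group by simp
  also have "\<dots> \<le> (\<Sum>c\<in>C. (1 - \<epsilon>/4) * rd c)" by (rule sum_mono) (rule perc)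
  also have "\<dots> = (1 - \<epsilon>/4) * real (total_label a)" using tot by (simp add: sum_distrib_left)
  finally show ?thesis .
qed
theorem lemma5p2:
  shows "\<exists>c::real. c > 0 \<and>
    (\<forall>(\<delta>::real) (\<tau>::real) (n::nat) (m::nat) (\<epsilon>::real) (a::shape) (S::nat set).
       0 < \<delta> \<longrightarrow> 0 < \<tau> \<longrightarrow> 2 \<le> n \<longrightarrow> 0 < \<epsilon> \<longrightarrow> \<epsilon> \<le> 1 \<longrightarrow>
       1 \<le> m \<longrightarrow> real m \<le> real n powr (3/2 - \<epsilon>) \<longrightarrow>
       wf_shape a \<longrightarrow> in_L \<delta> \<tau> n a \<longrightarrow>
       \<not> trivial_shape a \<longrightarrow> \<not> spider a \<longrightarrow>
       min_vertex_separator n m a S \<longrightarrow>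
       1 / real n powr (real (total_label a) / 2) *
         real n powr ((wt n m a (verts a) - wt n m a S) / 2)
       \<le> 1 / real n powr (c * \<epsilon> * real (total_label a)))"
proof (intro exI[of _ "1/8"] conjI allI impI)
  show "(0::real) < 1/8" by simp
  fix \<delta> \<tau> :: real and n m :: nat and \<epsilon> :: real and a :: shape and S :: "nat set"
  assume h: "0 < \<delta>" "0 < \<tau>" "2 \<le> n" "0 < \<epsilon>" "\<epsilon> \<le> 1" "1 \<le> m"
    "real m \<le> real n powr (3/2 - \<epsilon>)" "wf_shape a" "in_L \<delta> \<tau> n a" "\<not> trivial_shape a" "\<not> spider a"
    "min_vertex_separator n m a S"
  have sep: "vertex_separator a S" using h(12) unfolding min_vertex_separator_def by blast
  have n1: "1 < real n" using h(3) by simp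
  have m0: "0 < real m" using h(6) by simp
  have "log (real n) (real m) \<le> log (real n) (real n powr (3/2 - \<epsilon>))"
    using h(7) n1 m0 by (subst log_le_cancel_iff) auto
  also have "\<dots> = 3/2 - \<epsilon>" using n1 by simp
  finally have tle: "log (real n) (real m) \<le> 3/2 - \<epsilon>" .
  have X: "wt n m a (verts a) - wt n m a S \<le> (1 - \<epsilon>/4) * real (total_label a)"
    using key[OF h(8) h(9) h(11) sep h(4) h(5) tle] .
  define X where "X = wt n m a (verts a) - wt n m a S"
  define T where "T = real (total_label a)"
  have "1 / real n powr (T / 2) * real n powr (X / 2) = real n powr (X/2 - T/2)"
    by (simp add: powr_diff)
  also have "\<dots> \<le> real n powr (- (1/8 * \<epsilon> * T))"
  proof (rule powr_mono)
    show "X/2 - T/2 \<le> - (1/8 * \<epsilon> * T)" using arith3[OF X] unfolding X_def T_def .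
  qed (use n1 in simp)
  also have "\<dots> = 1 / real n powr (1/8 * \<epsilon> * T)" by (simp add: powr_minus_divide)
  finally show "1 / real n powr (real (total_label a) / 2) *
         real n powr ((wt n m a (verts a) - wt n m a S) / 2)
       \<le> 1 / real n powr (1/8 * \<epsilon> * real (total_label a))" unfolding X_def T_def .
qed

end
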